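(* Let $U\subset\mathbb{R}^n$ be open and connected, and let $Qw=\Delta w-\frac{D^2w(Dw,Dw)}{1+|Dw|^2}+|Dw|^2$. (i) If $w\in C^2(U)$ satisfies $Qw\ge 0$ in $U$ and attains a maximum at a point of $U$, then $w$ is constant. (ii) If $w\in C^2(U)$ satisfies $Qw\le 0$ in $U$ and attains a minimum at a point of $U$, then $w$ is constant. Consequently, if $u\in C^2(U)$, $u>0$, satisfies $\operatorname{div}\frac{u\,Du}{\sqrt{u^2+|Du|^2}}\ge 0$ in $U$ and attains a maximum at a point of $U$, then $u$ is constant; and if $u\in C^2(U)$, $u>0$, satisfies $\operatorname{div}\frac{u\,Du}{\sqrt{u^2+|Du|^2}}\le 0$ in $U$ and attains a minimum at a point of $U$, then $u$ is constant.
   Context: $D^2w(Dw,Dw)=\sum_{i,j}\partial_i\partial_j w\,\partial_i w\,\partial_j w$. *)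

theory Defs
  imports "HOL-Analysis.Analysis"
begin

definition partial :: "'n::finite \<Rightarrow> (real^'n \<Rightarrow> real) \<Rightarrow> real^'n \<Rightarrow> real" where
  "partial i f x = deriv (\<lambda>t. f (x + t *\<^sub>R axis i 1)) 0"

definition C2_on :: "(real^'n::finite) set \<Rightarrow> (real^'n \<Rightarrow> real) \<Rightarrow> bool" where
  "C2_on U f \<longleftrightarrow> (\<forall>x\<in>U. f differentiable (at x)) \<and>
     (\<forall>i. \<forall>x\<in>U. (partial i f) differentiable (at x)) \<and>
     (\<forall>i j. continuous_on U (partial j (partial i f)))"

definition grad_sq :: "(real^'n::finite \<Rightarrow> real) \<Rightarrow> real^'n \<Rightarrow> real" where
  "grad_sq w x = (\<Sum>i\<in>UNIV. (partial i w x)^2)"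

definition Qop :: "(real^'n::finite \<Rightarrow> real) \<Rightarrow> real^'n \<Rightarrow> real" where
  "Qop w x = (\<Sum>i\<in>UNIV. partial i (partial i w) x)
     - (\<Sum>i\<in>UNIV. \<Sum>j\<in>UNIV. partial i (partial j w) x * partial i w x * partial j w x)
         / (1 + grad_sq w x)
     + grad_sq w x"

definition divop :: "(real^'n::finite \<Rightarrow> real) \<Rightarrow> real^'n \<Rightarrow> real" where
  "divop u x = (\<Sum>i\<in>UNIV. partial i
       (\<lambda>y. u y * partial i u y / sqrt ((u y)^2 + grad_sq u y)) x)"

end

theory Submission
  imports Defs
begin

lemma line_has_derivative:
  fixes f :: "real^'n::finite \<Rightarrow> real"
  assumes "(f has_derivative f') (at (x + t0 *\<^sub>R e))"
  shows "((\<lambda>t. f (x + t *\<^sub>R e)) has_real_derivative f' e) (at t0)"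
proof -
  have lin: "linear f'" using assms has_derivative_linear by blast
  have "((\<lambda>t. f (x + t *\<^sub>R e)) has_derivative (\<lambda>t. f' (t *\<^sub>R e))) (at t0)"
    by (rule has_derivative_compose[where g=f and f="\<lambda>t. x + t *\<^sub>R e", simplified, OF _ ])
       (auto intro!: derivative_eq_intros assms)
  moreover have "(\<lambda>t. f' (t *\<^sub>R e)) = (\<lambda>t. t * f' e)"
    using linear_scale[OF lin] by auto
  moreover have "(\<lambda>t. t * f' e) = (*) (f' e)" by (simp add: fun_eq_iff)
  ultimately show ?thesis by (simp add: has_field_derivative_def)
qed

lemma partial_eq_fderiv:
  fixes f :: "real^'n::finite \<Rightarrow> real"
  assumes "(f has_derivative f') (at x)"
  shows "partial i f x = f' (axis i 1)"
  unfolding partial_def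
  by (rule DERIV_imp_deriv, rule line_has_derivative) (simp add: assms)

lemma fderiv_expand:
  fixes f :: "real^'n::finite \<Rightarrow> real"
  assumes "(f has_derivative f') (at x)"
  shows "f' e = (\<Sum>j\<in>UNIV. e$j * partial j f x)"
proof -
  have lin: "linear f'" using assms has_derivative_linear by blast
  have "f' e = f' (\<Sum>j\<in>UNIV. e$j *\<^sub>R axis j 1)"
    using basis_expansion[of e] by (simp add: scalar_mult_eq_scaleR)
  also have "\<dots> = (\<Sum>j\<in>UNIV. e$j * f' (axis j 1))"
    by (simp add: linear_sum[OF lin] linear_scale[OF lin])
  finally show ?thesis using partial_eq_fderiv[OF assms] by simp
qed

lemma line_deriv:
  fixes f :: "real^'n::finite \<Rightarrow> real"
  assumes "f differentiable (at (x + t0 *\<^sub>R e))"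
  shows "((\<lambda>t. f (x + t *\<^sub>R e)) has_real_derivative (\<Sum>j\<in>UNIV. e$j * partial j f (x + t0 *\<^sub>R e))) (at t0)"
proof -
  obtain f' where d: "(f has_derivative f') (at (x + t0 *\<^sub>R e))"
    using assms differentiable_def by blast
  show ?thesis using line_has_derivative[OF d] fderiv_expand[OF d] by simp
qed

lemma partial_deriv:
  fixes f :: "real^'n::finite \<Rightarrow> real"
  assumes "f differentiable (at x)"
  shows "((\<lambda>t. f (x + t *\<^sub>R axis i 1)) has_real_derivative partial i f x) (at 0)"
proof -
  have "(\<Sum>j\<in>UNIV. (axis i 1::real^'n)$j * partial j f x) = partial i f x"
    by (simp add: axis_def if_distrib[of "\<lambda>c. c * _"] sum.delta cong: if_cong)
  then show ?thesis using line_deriv[of f x 0 "axis i 1"] assms by simp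
qed

lemma partial_cong:
  fixes f :: "real^'n::finite \<Rightarrow> real"
  assumes "open S" "x \<in> S" "\<And>y. y \<in> S \<Longrightarrow> f y = g y"
  shows "partial i f x = partial i g x"
  unfolding partial_def
proof (rule deriv_cong_ev[OF _ refl])
  obtain r where r: "r > 0" "ball x r \<subseteq> S" using assms(1,2) open_contains_ball by blast
  have "eventually (\<lambda>t. x + t *\<^sub>R axis i 1 \<in> S) (nhds 0)"
    unfolding eventually_nhds_metric
  proof (intro exI[of _ r] conjI allI impI)
    fix t :: real assume "dist t 0 < r"
    then have "x + t *\<^sub>R axis i 1 \<in> ball x r" by (simp add: dist_norm)
    then show "x + t *\<^sub>R axis i 1 \<in> S" using r by blast
  qed (use r in auto)
  then show "eventually (\<lambda>t. f (x + t *\<^sub>R axis i 1) = g (x + t *\<^sub>R axis i 1)) (nhds 0)"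
    by eventually_elim (use assms(3) in auto)
qed

lemma second_deriv_test:
  fixes g g' :: "real \<Rightarrow> real"
  assumes d: "\<delta> > 0" and mx: "\<forall>t. \<bar>t\<bar> < \<delta> \<longrightarrow> g t \<le> g 0"
    and dg: "\<forall>t. \<bar>t\<bar> < \<delta> \<longrightarrow> DERIV g t :> g' t" and dg': "DERIV g' 0 :> c"
  shows "c \<le> 0"
proof (rule ccontr)
  assume "\<not> c \<le> 0" then have c: "c > 0" by simp
  have g0: "g' 0 = 0"
  proof -
    have "\<forall>y. \<bar>0 - y\<bar> < \<delta> \<longrightarrow> g y \<le> g 0" using mx by simp
    moreover have "DERIV g 0 :> g' 0" using dg d by auto
    ultimately show ?thesis using DERIV_local_max[where f=g and x=0 and l="g' 0" and d=\<delta>] d by blast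
  qed
  obtain d1 where d1: "d1 > 0" "\<forall>h>0. h < d1 \<longrightarrow> g' 0 < g' (0 + h)"
    using DERIV_pos_inc_right[OF dg' c] by blast
  define h where "h = min d1 \<delta> / 2"
  have h: "h > 0" "h < d1" "h < \<delta>" using d d1 by (auto simp: h_def)
  obtain z where z: "0 < z" "z < h" "g h - g 0 = (h - 0) * g' z"
    using MVT2[of 0 h g g'] h dg by auto
  have "g' z > 0" using d1(2) z h g0 by auto
  then have "h * g' z > 0" using h by simp
  moreover have "g h - g 0 = h * g' z" using z by simp
  ultimately have "g h > g 0" by linarith
  moreover have "g h \<le> g 0" using mx h by auto
  ultimately show False by simp
qed

lemma trace_decomp:
  fixes W :: "'n::finite \<Rightarrow> 'n \<Rightarrow> real" and p :: "'n \<Rightarrow> real"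
  shows "(\<Sum>i\<in>UNIV. \<Sum>j\<in>UNIV. \<Sum>k\<in>UNIV.
     ((if i = j then 1 else 0) - b * p i * p j) * ((if i = k then 1 else 0) - b * p i * p k) * W k j)
   = (\<Sum>i\<in>UNIV. W i i) - (2*b - b^2 * (\<Sum>i\<in>UNIV. (p i)^2)) * (\<Sum>i\<in>UNIV. \<Sum>j\<in>UNIV. W i j * p i * p j)"
proof -
  have e: "((if i = j then 1 else 0) - b * p i * p j) * ((if i = k then 1 else 0) - b * p i * p k) * W k j
     = (if i = j then (if i = k then W k j else 0) else 0) - (if i = j then b * p i * p k * W k j else 0)
       - (if i = k then b * p i * p j * W k j else 0) + b^2 * (p i)^2 * (p j * p k * W k j)" for i j k
    by (auto simp: algebra_simps power2_eq_square)
  have s1: "(\<Sum>i\<in>UNIV. \<Sum>j\<in>UNIV. \<Sum>k\<in>UNIV. (if i = j then (if i = k then W k j else 0) else 0)) = (\<Sum>i\<in>UNIV. W i i)"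
  proof -
    have "(\<Sum>j\<in>UNIV. \<Sum>k\<in>UNIV. (if i = j then (if i = k then W k j else 0) else 0)) = W i i" for i
    proof -
      have "(\<Sum>k\<in>UNIV. (if i = j then (if i = k then W k j else 0) else 0)) = (if i = j then W i j else 0)" for j
        by (cases "i = j") (simp_all add: sum.delta')
      then show ?thesis by (simp add: sum.delta')
    qed
    then show ?thesis by simp
  qed
  have s2: "(\<Sum>i\<in>UNIV. \<Sum>j\<in>UNIV. \<Sum>k\<in>UNIV. (if i = j then b * p i * p k * W k j else 0))
      = b * (\<Sum>i\<in>UNIV. \<Sum>j\<in>UNIV. W i j * p i * p j)"
  proof -
    have A: "(\<Sum>j\<in>UNIV. \<Sum>k\<in>UNIV. if i = j then b * p i * p k * W k j else 0) = (\<Sum>k\<in>UNIV. b * p i * p k * W k i)" for i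
    proof -
      have "(\<Sum>k\<in>UNIV. if i = j then b * p i * p k * W k j else 0) = (if i = j then (\<Sum>k\<in>UNIV. b * p i * p k * W k j) else 0)" for j
        by (cases "i = j") simp_all
      then show ?thesis by (simp add: sum.delta')
    qed
    have B: "(\<Sum>i\<in>UNIV. \<Sum>k\<in>UNIV. b * p i * p k * W k i) = (\<Sum>k\<in>UNIV. \<Sum>i\<in>UNIV. b * p i * p k * W k i)"
      by (rule sum.swap)
    show ?thesis unfolding A B by (simp add: sum_distrib_left algebra_simps)
  qed
  have s3: "(\<Sum>i\<in>UNIV. \<Sum>j\<in>UNIV. \<Sum>k\<in>UNIV. (if i = k then b * p i * p j * W k j else 0))
      = b * (\<Sum>i\<in>UNIV. \<Sum>j\<in>UNIV. W i j * p i * p j)"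
  proof -
    have "(\<Sum>k\<in>UNIV. (if i = k then b * p i * p j * W k j else 0)) = b * (W i j * p i * p j)" for i j
      by (simp add: sum.delta')
    then show ?thesis by (simp add: sum_distrib_left algebra_simps)
  qed
  have s4: "(\<Sum>i\<in>UNIV. \<Sum>j\<in>UNIV. \<Sum>k\<in>UNIV. b^2 * (p i)^2 * (p j * p k * W k j))
      = b^2 * (\<Sum>i\<in>UNIV. (p i)^2) * (\<Sum>i\<in>UNIV. \<Sum>j\<in>UNIV. W i j * p i * p j)"
  proof -
    have B: "(\<Sum>j\<in>UNIV. \<Sum>k\<in>UNIV. p j * p k * W k j) = (\<Sum>k\<in>UNIV. \<Sum>j\<in>UNIV. p j * p k * W k j)"
      by (rule sum.swap)
    have C: "(\<Sum>i\<in>UNIV. \<Sum>j\<in>UNIV. \<Sum>k\<in>UNIV. b^2 * (p i)^2 * (p j * p k * W k j))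
       = (\<Sum>i\<in>UNIV. b^2 * (p i)^2) * (\<Sum>j\<in>UNIV. \<Sum>k\<in>UNIV. p j * p k * W k j)"
    proof -
      have "(\<Sum>i\<in>UNIV. \<Sum>j\<in>UNIV. \<Sum>k\<in>UNIV. b^2 * (p i)^2 * (p j * p k * W k j))
        = (\<Sum>i\<in>UNIV. b^2 * (p i)^2 * (\<Sum>j\<in>UNIV. \<Sum>k\<in>UNIV. p j * p k * W k j))"
        by (simp only: sum_distrib_left)
      also have "\<dots> = (\<Sum>i\<in>UNIV. b^2 * (p i)^2) * (\<Sum>j\<in>UNIV. \<Sum>k\<in>UNIV. p j * p k * W k j)"
        by (simp only: sum_distrib_right)
      finally show ?thesis .
    qed
    show ?thesis unfolding C B by (simp add: sum_distrib_left algebra_simps)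
  qed
  show ?thesis
    apply (simp only: e sum.distrib sum_subtractf s1 s2 s3 s4)
    apply (simp add: algebra_simps)
    done
qed

lemma line_sq:
  fixes z y e :: "real^'n::finite"
  shows "(z + t *\<^sub>R e - y) \<bullet> (z + t *\<^sub>R e - y) = (z-y)\<bullet>(z-y) + 2*t*((z-y)\<bullet>e) + t^2*(e\<bullet>e)"
proof -
  have "z + t *\<^sub>R e - y = (z - y) + t *\<^sub>R e" by simp
  then show ?thesis
    by (simp only:) (simp add: inner_add_left inner_add_right inner_diff_left inner_diff_right inner_commute power2_eq_square algebra_simps)
qed

lemma small_line:
  fixes z e :: "real^'n::finite"
  assumes "\<rho> > 0"
  shows "\<exists>\<delta>>0. \<forall>t. \<bar>t\<bar> < \<delta> \<longrightarrow> z + t *\<^sub>R e \<in> ball z \<rho>"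
proof (intro exI[of _ "\<rho> / (norm e + 1)"] conjI allI impI)
  show "\<rho> / (norm e + 1) > 0" using assms by (simp add: add_nonneg_pos)
  fix t :: real assume t: "\<bar>t\<bar> < \<rho> / (norm e + 1)"
  have "\<bar>t\<bar> * norm e \<le> \<bar>t\<bar> * (norm e + 1)" by (simp add: mult_left_mono)
  also have "\<dots> < \<rho>" using t by (simp add: pos_less_divide_eq add_nonneg_pos)
  finally show "z + t *\<^sub>R e \<in> ball z \<rho>" by (simp add: dist_norm)
qed

lemma first_order:
  fixes w :: "real^'n::finite \<Rightarrow> real" and y z :: "real^'n"
  assumes z: "\<rho> > 0" "ball z \<rho> \<subseteq> U" and dw: "\<forall>x\<in>U. w differentiable (at x)"
    and mx: "\<forall>x\<in>ball z \<rho>. w x + \<epsilon>*exp(-\<alpha>*((x-y)\<bullet>(x-y))) \<le> w z + \<epsilon>*exp(-\<alpha>*((z-y)\<bullet>(z-y)))"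
  shows "partial i w z = 2*\<alpha>*\<epsilon>*exp(-\<alpha>*((z-y)\<bullet>(z-y))) * (z-y)$i"
proof -
  define e :: "real^'n" where "e = axis i 1"
  define r2 where "r2 = (z-y)\<bullet>(z-y)"
  define B where "B = (z-y)\<bullet>e"
  define C where "C = e\<bullet>e"
  define g where "g t = w (z + t *\<^sub>R e) + \<epsilon> * exp(-\<alpha>*(r2 + 2*t*B + t^2*C))" for t
  have zU: "z \<in> U" using z by auto
  have "DERIV g 0 :> partial i w z + \<epsilon> * (exp(-\<alpha>*(r2 + 2*0*B + 0^2*C)) * (-\<alpha>*(2*B + 2*0*C)))"
    unfolding g_def e_def
    by (rule derivative_eq_intros partial_deriv | use dw zU in auto)+
  then have dg: "DERIV g 0 :> partial i w z - 2*\<alpha>*\<epsilon>*exp(-\<alpha>*r2)*B" by (simp add: algebra_simps)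
  obtain \<delta> where d: "\<delta> > 0" "\<forall>t. \<bar>t\<bar> < \<delta> \<longrightarrow> z + t *\<^sub>R e \<in> ball z \<rho>"
    using small_line[OF z(1)] by blast
  have "\<forall>t. \<bar>0 - t\<bar> < \<delta> \<longrightarrow> g t \<le> g 0"
  proof (intro allI impI)
    fix t assume "\<bar>0 - t\<bar> < \<delta>"
    then have "z + t *\<^sub>R e \<in> ball z \<rho>" using d by auto
    then show "g t \<le> g 0" using mx unfolding g_def r2_def B_def C_def
      by (metis (no_types, lifting) line_sq add_0 scale_zero_left add.right_neutral mult_zero_left mult_zero_right power_zero_numeral)
  qed
  then have "partial i w z - 2*\<alpha>*\<epsilon>*exp(-\<alpha>*r2)*B = 0"
    using DERIV_local_max[OF dg d(1)] by blast
  moreover have "B = (z-y)$i" by (simp add: B_def e_def inner_axis)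
  ultimately show ?thesis by (simp add: r2_def)
qed

lemma second_order:
  fixes w :: "real^'n::finite \<Rightarrow> real" and y z e :: "real^'n"
  assumes z: "\<rho> > 0" "ball z \<rho> \<subseteq> U" and dw: "\<forall>x\<in>U. w differentiable (at x)"
    and dpw: "\<forall>j. partial j w differentiable (at z)"
    and mx: "\<forall>x\<in>ball z \<rho>. w x + \<epsilon>*exp(-\<alpha>*((x-y)\<bullet>(x-y))) \<le> w z + \<epsilon>*exp(-\<alpha>*((z-y)\<bullet>(z-y)))"
  shows "(\<Sum>j\<in>UNIV. e$j * (\<Sum>k\<in>UNIV. e$k * partial k (partial j w) z))
     + \<epsilon> * (exp(-\<alpha>*((z-y)\<bullet>(z-y))) * (4*\<alpha>^2*((z-y)\<bullet>e)^2 - 2*\<alpha>*(e\<bullet>e))) \<le> 0"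
proof -
  define r2 where "r2 = (z-y)\<bullet>(z-y)"
  define B where "B = (z-y)\<bullet>e"
  define C where "C = e\<bullet>e"
  define g where "g t = w (z + t *\<^sub>R e) + \<epsilon> * exp(-\<alpha>*(r2 + 2*t*B + t^2*C))" for t
  define g' where "g' t = (\<Sum>j\<in>UNIV. e$j * partial j w (z + t *\<^sub>R e)) + \<epsilon> * (exp(-\<alpha>*(r2 + 2*t*B + t^2*C)) * (-\<alpha>*(2*B + 2*t*C)))" for t
  obtain \<delta> where d: "\<delta> > 0" "\<forall>t. \<bar>t\<bar> < \<delta> \<longrightarrow> z + t *\<^sub>R e \<in> ball z \<rho>"
    using small_line[OF z(1)] by blast
  have mx': "\<forall>t. \<bar>t\<bar> < \<delta> \<longrightarrow> g t \<le> g 0"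
  proof (intro allI impI)
    fix t assume "\<bar>t\<bar> < \<delta>"
    then have "z + t *\<^sub>R e \<in> ball z \<rho>" using d by auto
    then show "g t \<le> g 0" using mx unfolding g_def r2_def B_def C_def
      by (metis (no_types, lifting) line_sq add_0 scale_zero_left add.right_neutral mult_zero_left mult_zero_right power_zero_numeral)
  qed
  have dg: "\<forall>t. \<bar>t\<bar> < \<delta> \<longrightarrow> DERIV g t :> g' t"
  proof (intro allI impI)
    fix t assume "\<bar>t\<bar> < \<delta>"
    then have "z + t *\<^sub>R e \<in> U" using d z by auto
    then have "w differentiable (at (z + t *\<^sub>R e))" using dw by auto
    note L = line_deriv[OF this]
    show "DERIV g t :> g' t"
      unfolding g_def g'_def
      by (rule derivative_eq_intros L | simp)+
  qed
  have "DERIV g' 0 :> (\<Sum>j\<in>UNIV. e$j * (\<Sum>k\<in>UNIV. e$k * partial k (partial j w) z))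
     + \<epsilon> * (exp(-\<alpha>*(r2 + 2*0*B + 0^2*C)) * (-\<alpha>*(2*B + 2*0*C)) * (-\<alpha>*(2*B + 2*0*C))
          + exp(-\<alpha>*(r2 + 2*0*B + 0^2*C)) * (-\<alpha>*(2*C)))"
  proof -
    have L: "DERIV (\<lambda>t. partial j w (z + t *\<^sub>R e)) 0 :> (\<Sum>k\<in>UNIV. e$k * partial k (partial j w) z)" for j
      using line_deriv[of "partial j w" z 0 e] dpw by simp
    show ?thesis unfolding g'_def
      by (rule derivative_eq_intros L refl | simp add: algebra_simps power2_eq_square)+
  qed
  then have dg': "DERIV g' 0 :> (\<Sum>j\<in>UNIV. e$j * (\<Sum>k\<in>UNIV. e$k * partial k (partial j w) z))
     + \<epsilon> * (exp(-\<alpha>*r2) * (4*\<alpha>^2*B^2 - 2*\<alpha>*C))"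
  proof (rule DERIV_cong)
    have "exp(-\<alpha>*(r2 + 2*0*B + 0^2*C)) * (-\<alpha>*(2*B + 2*0*C)) * (-\<alpha>*(2*B + 2*0*C))
          + exp(-\<alpha>*(r2 + 2*0*B + 0^2*C)) * (-\<alpha>*(2*C)) = exp(-\<alpha>*r2) * (4*\<alpha>^2*B^2 - 2*\<alpha>*C)"
      by (simp add: algebra_simps power2_eq_square)
    then show "(\<Sum>j\<in>UNIV. e$j * (\<Sum>k\<in>UNIV. e$k * partial k (partial j w) z))
     + \<epsilon> * (exp(-\<alpha>*(r2 + 2*0*B + 0^2*C)) * (-\<alpha>*(2*B + 2*0*C)) * (-\<alpha>*(2*B + 2*0*C))
          + exp(-\<alpha>*(r2 + 2*0*B + 0^2*C)) * (-\<alpha>*(2*C))) = (\<Sum>j\<in>UNIV. e$j * (\<Sum>k\<in>UNIV. e$k * partial k (partial j w) z))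
     + \<epsilon> * (exp(-\<alpha>*r2) * (4*\<alpha>^2*B^2 - 2*\<alpha>*C))" by (simp only:)
  qed
  show ?thesis using second_deriv_test[OF d(1) mx' dg dg'] by (simp add: r2_def B_def C_def)
qed

lemma QF_split:
  fixes e d :: "real^'n::finite" and W :: "'n \<Rightarrow> 'n \<Rightarrow> real"
  shows "(\<Sum>j\<in>UNIV. e$j * (\<Sum>k\<in>UNIV. e$k * (W k j + a * (d$k * d$j) + b * (if k = j then 1 else 0))))
    = (\<Sum>j\<in>UNIV. e$j * (\<Sum>k\<in>UNIV. e$k * W k j)) + a * (d \<bullet> e)^2 + b * (e \<bullet> e)"
proof -
  have i1: "d \<bullet> e = (\<Sum>j\<in>UNIV. e$j * d$j)" by (simp add: inner_vec_def mult.commute)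
  have i2: "e \<bullet> e = (\<Sum>j\<in>UNIV. e$j * e$j)" by (simp add: inner_vec_def)
  have sq: "(d \<bullet> e)^2 = (\<Sum>j\<in>UNIV. e$j * (\<Sum>k\<in>UNIV. e$k * (d$k * d$j)))"
    unfolding i1 power2_eq_square sum_product by (simp add: sum_distrib_left algebra_simps)
  have id: "(\<Sum>j\<in>UNIV. e$j * (\<Sum>k\<in>UNIV. e$k * (if k = j then 1 else 0))) = e \<bullet> e"
    unfolding i2 by (simp add: if_distrib sum.delta cong: if_cong)
  show ?thesis
    by (simp add: distrib_left sum.distrib sum_distrib_left[symmetric] sq[symmetric] id[symmetric]
        mult.left_commute[of _ a] mult.left_commute[of _ b])
qed

lemma interior_contra:
  fixes w :: "real^'n::finite \<Rightarrow> real" and y z :: "real^'n"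
  assumes z: "\<rho> > 0" "ball z \<rho> \<subseteq> U" and dw: "\<forall>x\<in>U. w differentiable (at x)"
    and dpw: "\<forall>j. partial j w differentiable (at z)"
    and mx: "\<forall>x\<in>ball z \<rho>. w x + \<epsilon>*exp(-\<alpha>*((x-y)\<bullet>(x-y))) \<le> w z + \<epsilon>*exp(-\<alpha>*((z-y)\<bullet>(z-y)))"
    and Q: "Qop w z \<ge> 0"
    and R: "R > 0" "R/2 \<le> norm (z - y)" "norm (z - y) \<le> R"
    and al: "\<alpha> * R^2 > 4*R + 4*real CARD('n)" and ep: "\<epsilon> > 0" "2*\<alpha>*\<epsilon>*R \<le> 1"
  shows False
proof -
  define d where "d = z - y"
  define r2 where "r2 = d \<bullet> d"
  define E where "E = exp(-\<alpha>*r2)"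
  define c where "c = 2*\<alpha>*\<epsilon>*E"
  define p where "p i = partial i w z" for i
  define W where "W k j = partial k (partial j w) z" for k j
  define P where "P = grad_sq w z"
  define K where "K = 1 + P"
  define b where "b = 1 / (K + sqrt K)"
  define n where "n = real CARD('n)"
  have a0: "\<alpha> > 0"
  proof (rule ccontr)
    assume "\<not> \<alpha> > 0" then have "\<alpha> * R^2 \<le> 0" by (simp add: mult_nonpos_nonneg)
    then show False using al R(1) by simp
  qed
  have r2n: "r2 = (norm d)^2" by (simp add: r2_def power2_norm_eq_inner)
  have r2v: "r2 = (\<Sum>i\<in>UNIV. d$i * d$i)" by (simp add: r2_def inner_vec_def)
  have pc: "p i = c * d$i" for i
    using first_order[OF z(1,2) dw mx, of i] by (simp add: p_def c_def E_def d_def r2_def)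
  have Pv: "P = c^2 * r2"
    by (simp add: P_def grad_sq_def p_def[symmetric] pc r2v power2_eq_square sum_distrib_left algebra_simps)
  have Qv: "Qop w z = (\<Sum>i\<in>UNIV. W i i) - (\<Sum>i\<in>UNIV. \<Sum>j\<in>UNIV. W i j * p i * p j) / K + P"
    by (simp add: Qop_def W_def p_def K_def P_def)
  have r20: "r2 \<ge> 0" by (simp add: r2_def)
  have P0: "P \<ge> 0" using Pv r20 by simp
  have K1: "K \<ge> 1" using P0 by (simp add: K_def)
  have sK: "sqrt K \<ge> 1" using K1 by simp
  have hb: "2*b - b^2*P = 1/K"
  proof -
    define \<sigma> where "\<sigma> = sqrt K"
    have Ks: "K = \<sigma>^2" using K1 by (simp add: \<sigma>_def)
    have s1: "\<sigma> \<ge> 1" using sK by (simp add: \<sigma>_def)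
    have PP: "P = \<sigma>^2 - 1" using Ks by (simp add: K_def)
    have bb: "b = 1 / (\<sigma>^2 + \<sigma>)" unfolding b_def \<sigma>_def using K1 by simp
    have s0: "\<sigma> > 0" using s1 by simp
    have nz: "\<sigma> + \<sigma> * \<sigma> \<noteq> 0" using s0 by (metis add_pos_pos mult_pos_pos less_irrefl)
    have bb2: "b * (\<sigma> * (\<sigma> + 1)) = 1" using s0 nz unfolding bb by (simp add: power2_eq_square field_simps)
    have "2*b - b^2*P = b * (2 - (b * (\<sigma> * (\<sigma> + 1))) * (\<sigma> - 1) / \<sigma>)"
      unfolding PP using s0 by (simp add: power2_eq_square field_simps)
    also have "\<dots> = b * ((\<sigma> + 1) / \<sigma>)" using s0 unfolding bb2 by (simp add: field_simps)
    also have "\<dots> = (b * (\<sigma> * (\<sigma> + 1))) / \<sigma>^2" using s0 by (simp add: power2_eq_square field_simps)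
    also have "\<dots> = 1/K" unfolding bb2 Ks ..
    finally show ?thesis .
  qed
  define v :: "'n \<Rightarrow> real^'n" where "v i = (\<chi> j. (if i = j then 1 else 0) - b * p i * p j)" for i
  define W' where "W' k j = W k j + (\<epsilon>*E*4*\<alpha>^2) * (d$k*d$j) + (-\<epsilon>*E*2*\<alpha>) * (if k = j then 1 else 0)" for k j
  have SO: "(\<Sum>j\<in>UNIV. (v i)$j * (\<Sum>k\<in>UNIV. (v i)$k * W' k j)) \<le> 0" for i
  proof -
    have "(\<Sum>j\<in>UNIV. (v i)$j * (\<Sum>k\<in>UNIV. (v i)$k * W' k j))
       = (\<Sum>j\<in>UNIV. (v i)$j * (\<Sum>k\<in>UNIV. (v i)$k * W k j)) + (\<epsilon>*E*4*\<alpha>^2) * (d \<bullet> v i)^2 + (-\<epsilon>*E*2*\<alpha>) * (v i \<bullet> v i)"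
      unfolding W'_def by (rule QF_split)
    also have "\<dots> = (\<Sum>j\<in>UNIV. (v i)$j * (\<Sum>k\<in>UNIV. (v i)$k * partial k (partial j w) z))
     + \<epsilon> * (exp(-\<alpha>*((z-y)\<bullet>(z-y))) * (4*\<alpha>^2*((z-y)\<bullet>(v i))^2 - 2*\<alpha>*((v i)\<bullet>(v i))))"
      by (simp add: W_def E_def r2_def d_def algebra_simps)
    also have "\<dots> \<le> 0" by (rule second_order[OF z dw dpw mx])
    finally show ?thesis .
  qed
  have sumSO: "(\<Sum>i\<in>UNIV. \<Sum>j\<in>UNIV. (v i)$j * (\<Sum>k\<in>UNIV. (v i)$k * W' k j)) \<le> 0"
    by (rule sum_nonpos) (use SO in auto)
  have tri: "(\<Sum>i\<in>UNIV. \<Sum>j\<in>UNIV. (v i)$j * (\<Sum>k\<in>UNIV. (v i)$k * W' k j))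
     = (\<Sum>i\<in>UNIV. W' i i) - (2*b - b^2 * (\<Sum>i\<in>UNIV. (p i)^2)) * (\<Sum>i\<in>UNIV. \<Sum>j\<in>UNIV. W' i j * p i * p j)"
    unfolding trace_decomp[symmetric] by (simp add: v_def sum_distrib_left mult.assoc)
  have trW: "(\<Sum>i\<in>UNIV. W' i i) = (\<Sum>i\<in>UNIV. W i i) + \<epsilon>*E*4*\<alpha>^2 * r2 - \<epsilon>*E*2*\<alpha> * n"
    by (simp add: W'_def sum.distrib sum_subtractf r2v n_def sum_distrib_left[symmetric])
  have sp: "(\<Sum>i\<in>UNIV. (p i)^2) = P" by (simp add: P_def grad_sq_def p_def)
  have dp: "(\<Sum>i\<in>UNIV. d$i * p i) = c * r2" by (simp add: pc r2v sum_distrib_left algebra_simps)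
  have Wpp: "(\<Sum>i\<in>UNIV. \<Sum>j\<in>UNIV. W' i j * p i * p j)
     = (\<Sum>i\<in>UNIV. \<Sum>j\<in>UNIV. W i j * p i * p j) + \<epsilon>*E*4*\<alpha>^2 * (c*r2)^2 - \<epsilon>*E*2*\<alpha> * P"
  proof -
    have a: "(\<Sum>i\<in>UNIV. \<Sum>j\<in>UNIV. (d$i*d$j) * p i * p j) = (c*r2)^2"
      unfolding dp[symmetric] power2_eq_square sum_product by (simp add: algebra_simps)
    have b: "(\<Sum>i\<in>UNIV. \<Sum>j\<in>UNIV. (if i = j then 1 else 0) * p i * p j) = P"
    proof -
      have "(\<Sum>j\<in>UNIV. (if i = j then 1 else 0) * p i * p j) = (p i)^2" for i
      proof -
        have "(\<Sum>j\<in>UNIV. (if i = j then 1 else 0) * p i * p j) = (\<Sum>j\<in>UNIV. if i = j then p i * p j else 0)"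
          by (rule sum.cong) auto
        then show ?thesis by (simp add: sum.delta' power2_eq_square)
      qed
      then show ?thesis unfolding sp[symmetric] by simp
    qed
    have "(\<Sum>i\<in>UNIV. \<Sum>j\<in>UNIV. W' i j * p i * p j)
      = (\<Sum>i\<in>UNIV. \<Sum>j\<in>UNIV. W i j * p i * p j)
        + \<epsilon>*E*4*\<alpha>^2 * (\<Sum>i\<in>UNIV. \<Sum>j\<in>UNIV. (d$i*d$j) * p i * p j)
        + (-\<epsilon>*E*2*\<alpha>) * (\<Sum>i\<in>UNIV. \<Sum>j\<in>UNIV. (if i = j then 1 else 0) * p i * p j)"
      by (simp add: W'_def sum.distrib sum_subtractf sum_negf sum_distrib_left algebra_simps)
    then show ?thesis unfolding a b by simp
  qed
  have main: "\<epsilon>*E*(4*\<alpha>^2*r2 - 2*\<alpha>*n - 4*\<alpha>^2*(c*r2)^2/K + 2*\<alpha>*P/K) \<le> P"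
  proof -
    have "(\<Sum>i\<in>UNIV. W' i i) - (1/K) * (\<Sum>i\<in>UNIV. \<Sum>j\<in>UNIV. W' i j * p i * p j) \<le> 0"
      using sumSO unfolding tri sp hb .
    moreover have "(\<Sum>i\<in>UNIV. W i i) - (\<Sum>i\<in>UNIV. \<Sum>j\<in>UNIV. W i j * p i * p j) / K + P \<ge> 0"
      using Q Qv by simp
    ultimately show ?thesis unfolding trW Wpp by (simp add: algebra_simps add_divide_distrib diff_divide_distrib)
  qed
  have E0: "E > 0" by (simp add: E_def)
  have E1: "E \<le> 1" using a0 r20 by (simp add: E_def)
  have eE: "\<epsilon> * E > 0" using ep E0 by simp
  have c0: "c > 0" using a0 ep E0 by (simp add: c_def)
  have cR: "c * R \<le> 1"
  proof -
    have "c * R = (2*\<alpha>*\<epsilon>*R) * E" by (simp add: c_def algebra_simps)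
    also have "\<dots> \<le> (2*\<alpha>*\<epsilon>*R) * 1" using E1 a0 ep R(1) by (intro mult_left_mono) auto
    finally show ?thesis using ep by simp
  qed
  have nd: "norm d \<ge> R/2" "norm d \<le> R" using R by (auto simp: d_def)
  have r2lo: "R^2/4 \<le> r2"
  proof -
    have "(R/2)^2 \<le> (norm d)^2" using nd R(1) by (intro power_mono) auto
    then show ?thesis by (simp add: r2n power_divide)
  qed
  have r2hi: "r2 \<le> R^2" unfolding r2n using nd by (intro power_mono) auto
  have cr2: "c * r2 \<le> R"
  proof -
    have "c * r2 \<le> c * R^2" using r2hi c0 by (intro mult_left_mono) auto
    also have "\<dots> = (c * R) * R" by (simp add: power2_eq_square)
    also have "\<dots> \<le> 1 * R" using cR R(1) by (intro mult_right_mono) auto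
    finally show ?thesis by simp
  qed
  have Kle: "K \<le> 2"
  proof -
    have "P = c * (c * r2)" by (simp add: Pv power2_eq_square)
    also have "\<dots> \<le> c * R" using cr2 c0 by (intro mult_left_mono) auto
    finally show ?thesis using cR by (simp add: K_def)
  qed
  have K0: "K > 0" using K1 by simp
  have X: "4*\<alpha>^2*r2 - 2*\<alpha>*n - 4*\<alpha>^2*(c*r2)^2/K + 2*\<alpha>*P/K = 4*\<alpha>^2*r2/K - 2*\<alpha>*n + 2*\<alpha>*P/K"
  proof -
    have "4*\<alpha>^2*r2 - 4*\<alpha>^2*(c*r2)^2/K = 4*\<alpha>^2*r2/K"
      using K0 by (simp add: K_def Pv field_simps power2_eq_square)
    then show ?thesis by simp
  qed
  have "\<epsilon>*E*(4*\<alpha>^2*r2/K - 2*\<alpha>*n + 2*\<alpha>*P/K) \<le> \<epsilon>*E*(2*\<alpha>*(c*r2))"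
    using main unfolding X by (simp add: Pv c_def power2_eq_square algebra_simps)
  then have main2: "4*\<alpha>^2*r2/K - 2*\<alpha>*n + 2*\<alpha>*P/K \<le> 2*\<alpha>*(c*r2)"
    using eE by (meson mult_le_cancel_left_pos)
  have t1: "2*\<alpha>*P/K \<ge> 0" using a0 P0 K0 by simp
  have t2: "4*\<alpha>^2*r2/K \<ge> \<alpha>^2*R^2/2"
  proof -
    have "4*\<alpha>^2*r2/K \<ge> 4*\<alpha>^2*r2/2" using Kle K0 a0 r20
      by (intro divide_left_mono) (auto simp: mult_pos_pos)
    moreover have "4*\<alpha>^2*r2/2 \<ge> \<alpha>^2*R^2/2" using r2lo a0 by simp
    ultimately show ?thesis by linarith
  qed
  have t3: "2*\<alpha>*(c*r2) \<le> 2*\<alpha>*R" using cr2 a0 by simp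
  have "\<alpha>^2*R^2/2 - 2*\<alpha>*n \<le> 2*\<alpha>*R" using main2 t1 t2 t3 by linarith
  then have "\<alpha> * (\<alpha>*R^2) \<le> \<alpha> * (4*R + 4*n)" by (simp add: power2_eq_square algebra_simps)
  then have "\<alpha>*R^2 \<le> 4*R + 4*n" using a0 by simp
  then show False using al by (simp add: n_def)
qed

lemma hopf_contra:
  fixes w :: "real^'n::finite \<Rightarrow> real" and y x2 :: "real^'n"
  assumes U: "open U" and dw: "\<forall>x\<in>U. w differentiable (at x)"
    and dpw: "\<forall>j. \<forall>x\<in>U. partial j w differentiable (at x)"
    and Q: "\<forall>x\<in>U. Qop w x \<ge> 0"
    and R: "R > 0" "cball y R \<subseteq> U"
    and lt: "\<forall>x\<in>ball y R. w x < M" and x2: "dist y x2 = R" "w x2 = M"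
    and le: "\<forall>x\<in>U. w x \<le> M"
  shows False
proof -
  have contU: "continuous_on U w"
    using dw by (meson continuous_at_imp_continuous_on differentiable_imp_continuous_within)
  define K where "K = sphere y (R/2)"
  have KU: "K \<subseteq> ball y R" using R(1) by (auto simp: K_def)
  obtain \<delta> where d: "\<delta> > 0" "\<forall>x\<in>K. w x \<le> M - \<delta>"
  proof (cases "K = {}")
    case True then show ?thesis using that[of 1] by auto
  next
    case False
    have "compact K" by (simp add: K_def)
    moreover have "continuous_on K w" using contU KU R(2)
      by (meson ball_subset_cball continuous_on_subset order_trans)
    ultimately obtain xm where xm: "xm \<in> K" "\<forall>x\<in>K. w x \<le> w xm"
      using continuous_attains_sup[of K w] False by blast
    have "w xm < M" using lt xm(1) KU by auto
    then show ?thesis using that[of "M - w xm"] xm by auto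
  qed
  define n where "n = real CARD('n)"
  define \<alpha> where "\<alpha> = (4*R + 4*n)/R^2 + 1"
  have n0: "n \<ge> 0" by (simp add: n_def)
  have a0: "\<alpha> > 0" using R(1) n0 by (simp add: \<alpha>_def add_nonneg_pos)
  have al: "\<alpha> * R^2 > 4*R + 4*n" using R(1) by (simp add: \<alpha>_def field_simps)
  define \<epsilon> where "\<epsilon> = min (\<delta>/2) (1/(2*\<alpha>*R))"
  have ep0: "\<epsilon> > 0" using d(1) a0 R(1) by (simp add: \<epsilon>_def)
  have ep1: "2*\<alpha>*\<epsilon>*R \<le> 1"
  proof -
    have "\<epsilon> \<le> 1/(2*\<alpha>*R)" by (simp add: \<epsilon>_def)
    then have "(2*\<alpha>*R) * \<epsilon> \<le> (2*\<alpha>*R) * (1/(2*\<alpha>*R))" using a0 R(1) by (intro mult_left_mono) auto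
    then show ?thesis using a0 R(1) by (simp add: algebra_simps)
  qed
  have ep2: "\<epsilon> \<le> \<delta>/2" by (simp add: \<epsilon>_def)
  define f where "f x = w x + \<epsilon>*exp(-\<alpha>*((x-y)\<bullet>(x-y)))" for x
  define eR where "eR = exp(-\<alpha>*R^2)"
  define A where "A = cball y R - ball y (R/2)"
  have AU: "A \<subseteq> U" using R(2) by (auto simp: A_def)
  have x2A: "x2 \<in> A" using x2 R(1) by (auto simp: A_def)
  have "compact A" unfolding A_def by (intro compact_diff compact_cball open_ball)
  moreover have "continuous_on A f" unfolding f_def
    by (intro continuous_intros continuous_on_subset[OF contU AU])
  ultimately obtain z where z: "z \<in> A" "\<forall>x\<in>A. f x \<le> f z"
    using continuous_attains_sup[of A f] x2A by blast
  have fz: "f z \<le> M + \<epsilon> * eR"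
  proof -
    have dz: "R/2 \<le> dist y z" "dist y z \<le> R" using z(1) by (auto simp: A_def)
    consider "dist y z = R" | "dist y z = R/2" | "R/2 < dist y z \<and> dist y z < R" using dz by linarith
    then show ?thesis
    proof cases
      case 1
      have "(z-y)\<bullet>(z-y) = R^2" using 1 by (simp add: power2_norm_eq_inner[symmetric] dist_norm norm_minus_commute)
      moreover have "w z \<le> M" using le AU z(1) by auto
      ultimately show ?thesis by (simp add: f_def eR_def)
    next
      case 2
      then have "z \<in> K" by (simp add: K_def)
      then have "w z \<le> M - \<delta>" using d by auto
      moreover have "exp(-\<alpha>*((z-y)\<bullet>(z-y))) \<le> 1" using a0 by simp
      then have "\<epsilon>*exp(-\<alpha>*((z-y)\<bullet>(z-y))) \<le> \<epsilon>" using ep0 by (simp add: mult_left_le)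
      moreover have "\<epsilon> * eR \<ge> 0" using ep0 by (simp add: eR_def)
      ultimately show ?thesis using ep2 d(1) by (simp add: f_def)
    next
      case 3
      define \<rho> where "\<rho> = min (dist y z - R/2) (R - dist y z)"
      have r0: "\<rho> > 0" using 3 by (simp add: \<rho>_def)
      have bA: "ball z \<rho> \<subseteq> A"
      proof
        fix x assume "x \<in> ball z \<rho>"
        then have "dist z x < \<rho>" by simp
        moreover have "dist y z \<le> dist y x + dist z x" "dist y x \<le> dist y z + dist z x"
          by (metis dist_commute dist_triangle)+
        ultimately show "x \<in> A" unfolding A_def \<rho>_def by auto
      qed
      have "False"
      proof (rule interior_contra[of \<rho> z U w \<epsilon> \<alpha> y R])
        show "\<rho> > 0" by (rule r0)
        show "ball z \<rho> \<subseteq> U" using bA AU by auto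
        show "\<forall>x\<in>U. w differentiable (at x)" by (rule dw)
        show "\<forall>j. partial j w differentiable (at z)" using dpw z(1) AU by auto
        show "\<forall>x\<in>ball z \<rho>. w x + \<epsilon>*exp(-\<alpha>*((x-y)\<bullet>(x-y))) \<le> w z + \<epsilon>*exp(-\<alpha>*((z-y)\<bullet>(z-y)))"
          using z(2) bA unfolding f_def by auto
        show "Qop w z \<ge> 0" using Q z(1) AU by auto
        show "R > 0" by (rule R(1))
        show "R/2 \<le> norm (z - y)" "norm (z - y) \<le> R" using dz by (simp_all add: dist_norm norm_minus_commute)
        show "\<alpha> * R^2 > 4*R + 4*real CARD('n)" using al by (simp add: n_def)
        show "\<epsilon> > 0" by (rule ep0)
        show "2*\<alpha>*\<epsilon>*R \<le> 1" by (rule ep1)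
      qed
      then show ?thesis ..
    qed
  qed
  define e where "e = y - x2"
  have x2U: "x2 \<in> U" using x2A AU by auto
  have nx2: "(x2 - y) \<bullet> (x2 - y) = R^2"
    using x2(1) by (simp add: power2_norm_eq_inner[symmetric] dist_norm norm_minus_commute)
  have fx2: "f x2 = M + \<epsilon> * eR" using nx2 x2(2) by (simp add: f_def eR_def)
  define r2 where "r2 = (x2-y)\<bullet>(x2-y)"
  define B where "B = (x2-y)\<bullet>e"
  define C where "C = e\<bullet>e"
  have B: "B = -(R^2)"
  proof -
    have "y - x2 = -(x2 - y)" by simp
    then have "B = -((x2-y)\<bullet>(x2-y))" unfolding B_def e_def by (simp only: inner_minus_right)
    then show ?thesis using nx2 by simp
  qed
  define h where "h t = w (x2 + t *\<^sub>R e) + \<epsilon> * exp(-\<alpha>*(r2 + 2*t*B + t^2*C))" for t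
  have hf: "h t = f (x2 + t *\<^sub>R e)" for t
    by (simp add: h_def f_def line_sq r2_def B_def C_def)
  obtain \<rho> where rho: "\<rho> > 0" "ball x2 \<rho> \<subseteq> U" using U x2U open_contains_ball by blast
  obtain \<delta>1 where d1: "\<delta>1 > 0" "\<forall>t. \<bar>t\<bar> < \<delta>1 \<longrightarrow> x2 + t *\<^sub>R e \<in> ball x2 \<rho>"
    using small_line[OF rho(1)] by blast
  have Dw: "DERIV (\<lambda>t. w (x2 + t *\<^sub>R e)) 0 :> (\<Sum>j\<in>UNIV. e$j * partial j w x2)"
    using line_deriv[of w x2 0 e] dw x2U by simp
  have D0: "(\<Sum>j\<in>UNIV. e$j * partial j w x2) = 0"
  proof (rule DERIV_local_max[OF Dw d1(1)], intro allI impI)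
    fix t :: real assume "\<bar>0 - t\<bar> < \<delta>1"
    then have "x2 + t *\<^sub>R e \<in> U" using d1 rho by auto
    then show "w (x2 + t *\<^sub>R e) \<le> w (x2 + 0 *\<^sub>R e)" using le x2 by simp
  qed
  have "DERIV h 0 :> (\<Sum>j\<in>UNIV. e$j * partial j w x2) + \<epsilon> * (exp(-\<alpha>*(r2 + 2*0*B + 0^2*C)) * (-\<alpha>*(2*B + 2*0*C)))"
    unfolding h_def by (rule derivative_eq_intros Dw refl | simp)+
  then have Dh: "DERIV h 0 :> \<epsilon> * (eR * (2*\<alpha>*R^2))"
    using D0 B by (simp add: r2_def nx2 eR_def mult.assoc mult.left_commute)
  have pos: "\<epsilon> * (eR * (2*\<alpha>*R^2)) > 0" using ep0 a0 R(1) by (simp add: eR_def)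
  obtain d2 where d2: "d2 > 0" "\<forall>s>0. s < d2 \<longrightarrow> h 0 < h (0 + s)"
    using DERIV_pos_inc_right[OF Dh pos] by blast
  define s where "s = min d2 (1/2) / 2"
  have s: "s > 0" "s < d2" "s \<le> 1/2" using d2 by (auto simp: s_def)
  have "x2 + s *\<^sub>R e \<in> A"
  proof -
    have "x2 + s *\<^sub>R e - y = (1 - s) *\<^sub>R (x2 - y)" by (simp add: e_def algebra_simps)
    then have "dist y (x2 + s *\<^sub>R e) = (1 - s) * R"
      using s x2(1) by (simp add: dist_norm norm_minus_commute[of y] dist_commute)
    then show ?thesis using s R(1) by (auto simp: A_def)
  qed
  then have "f (x2 + s *\<^sub>R e) \<le> f z" using z(2) by blast
  then have "h s \<le> h 0" using fz fx2 hf[of s] hf[of 0] by simp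
  moreover have "h 0 < h s" using d2(2) s by auto
  ultimately show False by simp
qed

lemma core_max:
  fixes w :: "real^'n::finite \<Rightarrow> real"
  assumes U: "open U" "connected U" and dw: "\<forall>x\<in>U. w differentiable (at x)"
    and dpw: "\<forall>j. \<forall>x\<in>U. partial j w differentiable (at x)"
    and Q: "\<forall>x\<in>U. Qop w x \<ge> 0"
    and x0: "x0 \<in> U" "\<forall>x\<in>U. w x \<le> w x0"
  shows "\<exists>c. \<forall>x\<in>U. w x = c"
proof -
  define M where "M = w x0"
  have le: "\<forall>x\<in>U. w x \<le> M" using x0 by (simp add: M_def)
  have contU: "continuous_on U w"
    using dw by (meson continuous_at_imp_continuous_on differentiable_imp_continuous_within)
  define A where "A = {x\<in>U. w x = M}"
  define B where "B = w -` {..<M} \<inter> U"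
  have oB: "open B"
  proof -
    have "\<forall>B. open B \<longrightarrow> open (w -` B \<inter> U)" using continuous_on_open_vimage[OF U(1), of w] contU by blast
    then show ?thesis unfolding B_def using open_lessThan by blast
  qed
  have oA: "open A"
  proof (unfold open_contains_ball, intro ballI)
    fix x1 assume x1: "x1 \<in> A"
    have x1U: "x1 \<in> U" using x1 by (simp add: A_def)
    obtain \<rho> where rho: "\<rho> > 0" "cball x1 \<rho> \<subseteq> U"
      using open_contains_cball[THEN iffD1, OF U(1)] x1U by blast
    have "ball x1 (\<rho>/2) \<subseteq> A"
    proof
      fix y assume y: "y \<in> ball x1 (\<rho>/2)"
      have yU: "y \<in> U" using y rho by auto
      show "y \<in> A"
      proof (rule ccontr)
        assume "y \<notin> A"
        then have wy: "w y \<noteq> M" using yU by (simp add: A_def)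
        define T where "T = {x \<in> cball x1 \<rho>. w x = M}"
        have "closed T" unfolding T_def
          by (rule continuous_closed_preimage_constant) (use contU rho in \<open>auto intro: continuous_on_subset\<close>)
        moreover have "x1 \<in> T" using x1 rho by (simp add: T_def A_def)
        ultimately obtain x2 where x2: "x2 \<in> T" "\<And>z. z \<in> T \<Longrightarrow> dist y x2 \<le> dist y z"
          using distance_attains_inf[of T y] by blast
        define R where "R = dist y x2"
        have Rx1: "R \<le> dist y x1" using x2(2)[OF \<open>x1 \<in> T\<close>] by (simp add: R_def)
        have yx1: "dist y x1 < \<rho>/2" using y by (simp add: dist_commute)
        have "y \<in> cball x1 \<rho>" using yx1 rho(1) by (simp add: dist_commute)
        then have "y \<notin> T" using wy by (simp add: T_def)
        then have R0: "R > 0" using x2(1) by (auto simp: R_def)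
        have cb: "cball y R \<subseteq> ball x1 \<rho>"
        proof
          fix x assume "x \<in> cball y R"
          then have "dist y x \<le> R" by simp
          moreover have "dist x1 x \<le> dist x1 y + dist y x" by (rule dist_triangle)
          ultimately show "x \<in> ball x1 \<rho>" using Rx1 yx1 by (simp add: dist_commute)
        qed
        show False
        proof (rule hopf_contra[OF U(1) dw dpw Q R0])
          show "cball y R \<subseteq> U" using cb rho ball_subset_cball by blast
          show "\<forall>x\<in>ball y R. w x < M"
          proof
            fix x assume x: "x \<in> ball y R"
            then have xc: "x \<in> cball x1 \<rho>" using cb ball_subset_cball[of y R] ball_subset_cball[of x1 \<rho>] by blast
            have "w x \<le> M" using le xc rho by auto
            moreover have "w x \<noteq> M"
            proof
              assume "w x = M"
              then have "x \<in> T" using xc by (simp add: T_def)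
              then have "R \<le> dist y x" using x2(2) by (simp add: R_def)
              then show False using x by simp
            qed
            ultimately show "w x < M" by simp
          qed
          show "dist y x2 = R" by (simp add: R_def)
          show "w x2 = M" using x2(1) by (simp add: T_def)
          show "\<forall>x\<in>U. w x \<le> M" by (rule le)
        qed
      qed
    qed
    then show "\<exists>e>0. ball x1 e \<subseteq> A" using rho(1) by (intro exI[of _ "\<rho>/2"]) auto
  qed
  have "A \<inter> B \<inter> U = {}" by (auto simp: A_def B_def)
  moreover have "U \<subseteq> A \<union> B"
  proof
    fix x assume x: "x \<in> U"
    then have "w x \<le> M" using le by blast
    then have "w x = M \<or> w x < M" by linarith
    then show "x \<in> A \<union> B" using x by (auto simp: A_def B_def)
  qed
  ultimately have "A \<inter> U = {} \<or> B \<inter> U = {}" using connectedD[OF U(2) oA oB] by blast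
  moreover have "x0 \<in> A \<inter> U" using x0 by (simp add: A_def M_def)
  ultimately have "B \<inter> U = {}" by blast
  have "\<forall>x\<in>U. w x = M"
  proof
    fix x assume x: "x \<in> U"
    then have "x \<notin> B" using \<open>B \<inter> U = {}\<close> by blast
    then have "\<not> w x < M" using x by (simp add: B_def)
    then show "w x = M" using le x by force
  qed
  then show ?thesis by blast
qed

lemma diff_transfer:
  fixes f g :: "real^'n::finite \<Rightarrow> real"
  assumes "open U" "x \<in> U" "\<And>y. y \<in> U \<Longrightarrow> f y = g y" "f differentiable (at x)"
  shows "g differentiable (at x)"
proof -
  obtain f' where "(f has_derivative f') (at x)" using assms(4) differentiable_def by blast
  then have "(g has_derivative f') (at x)"
    by (rule has_derivative_transform_within_open[OF _ assms(1,2)]) (use assms(3) in auto)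
  then show ?thesis using differentiable_def by blast
qed

lemma partial_neg:
  fixes f :: "real^'n::finite \<Rightarrow> real"
  assumes "f differentiable (at x)"
  shows "partial i (\<lambda>y. - f y) x = - partial i f x"
proof -
  have "DERIV (\<lambda>t. - f (x + t *\<^sub>R axis i 1)) 0 :> - partial i f x"
    using partial_deriv[OF assms, of i] by (rule DERIV_minus)
  then show ?thesis unfolding partial_def by (rule DERIV_imp_deriv)
qed

lemma neg_props:
  fixes w :: "real^'n::finite \<Rightarrow> real"
  assumes U: "open U" and dw: "\<forall>x\<in>U. w differentiable (at x)"
    and dpw: "\<forall>j. \<forall>x\<in>U. partial j w differentiable (at x)"
  shows "\<forall>x\<in>U. (\<lambda>x. - w x) differentiable (at x)"
    and "\<forall>j. \<forall>x\<in>U. partial j (\<lambda>x. - w x) differentiable (at x)"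
    and "\<forall>x\<in>U. Qop (\<lambda>x. - w x) x = 2 * grad_sq w x - Qop w x"
proof -
  show "\<forall>x\<in>U. (\<lambda>x. - w x) differentiable (at x)" using dw by simp
  have p1: "partial j (\<lambda>x. - w x) y = - partial j w y" if "y \<in> U" for j y
    using partial_neg[where f=w and x=y and i=j] dw that by simp
  show "\<forall>j. \<forall>x\<in>U. partial j (\<lambda>x. - w x) differentiable (at x)"
  proof (intro allI ballI)
    fix j x assume x: "x \<in> U"
    show "partial j (\<lambda>x. - w x) differentiable (at x)"
      by (rule diff_transfer[OF U x, of "\<lambda>y. - partial j w y"]) (use p1 dpw x in auto)
  qed
  have p2: "partial k (partial j (\<lambda>x. - w x)) y = - partial k (partial j w) y" if y: "y \<in> U" for j k y
  proof -
    have "partial k (partial j (\<lambda>x. - w x)) y = partial k (\<lambda>y. - partial j w y) y"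
      by (rule partial_cong[OF U y]) (use p1 in auto)
    also have "\<dots> = - partial k (partial j w) y" using partial_neg[where f="partial j w" and x=y and i=k] dpw y by simp
    finally show ?thesis .
  qed
  show "\<forall>x\<in>U. Qop (\<lambda>x. - w x) x = 2 * grad_sq w x - Qop w x"
  proof
    fix x assume x: "x \<in> U"
    have g: "grad_sq (\<lambda>x. - w x) x = grad_sq w x" using p1[OF x] by (simp add: grad_sq_def)
    show "Qop (\<lambda>x. - w x) x = 2 * grad_sq w x - Qop w x"
    proof -
      have a: "(\<Sum>i\<in>UNIV. partial i (partial i (\<lambda>x. - w x)) x) = - (\<Sum>i\<in>UNIV. partial i (partial i w) x)"
        using p2[OF x] by (simp add: sum_negf)
      have b: "(\<Sum>i\<in>UNIV. \<Sum>j\<in>UNIV. partial i (partial j (\<lambda>x. - w x)) x * partial i (\<lambda>x. - w x) x * partial j (\<lambda>x. - w x) x)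
         = - (\<Sum>i\<in>UNIV. \<Sum>j\<in>UNIV. partial i (partial j w) x * partial i w x * partial j w x)"
      proof -
        have "partial i (partial j (\<lambda>x. - w x)) x * partial i (\<lambda>x. - w x) x * partial j (\<lambda>x. - w x) x
          = - (partial i (partial j w) x * partial i w x * partial j w x)" for i j
          unfolding p1[OF x] p2[OF x] by simp
        then show ?thesis by (simp add: sum_negf)
      qed
      show ?thesis unfolding Qop_def g a b by (simp only: minus_divide_left[symmetric]) 
    qed
  qed
qed

lemma log_basic:
  fixes u :: "real^'n::finite \<Rightarrow> real"
  assumes U: "open U" and du: "\<forall>x\<in>U. u differentiable (at x)"
    and dpu: "\<forall>j. \<forall>x\<in>U. partial j u differentiable (at x)"
    and pos: "\<forall>x\<in>U. u x > 0"
  shows "\<forall>x\<in>U. (\<lambda>x. ln (u x)) differentiable (at x)"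
    and "\<forall>x\<in>U. partial j (\<lambda>x. ln (u x)) x = partial j u x / u x"
    and "\<forall>j. \<forall>x\<in>U. partial j (\<lambda>x. ln (u x)) differentiable (at x)"
    and "\<forall>x\<in>U. partial k (partial j (\<lambda>x. ln (u x))) x
          = (partial k (partial j u) x * u x - partial j u x * partial k u x) / (u x)^2"
proof -
  show "\<forall>x\<in>U. (\<lambda>x. ln (u x)) differentiable (at x)"
  proof
    fix x assume x: "x \<in> U"
    obtain u' where "(u has_derivative u') (at x)" using du x differentiable_def by blast
    then have "((\<lambda>x. ln (u x)) has_derivative (\<lambda>h. u' h * inverse (u x))) (at x)"
      using pos x by (auto intro!: derivative_eq_intros)
    then show "(\<lambda>x. ln (u x)) differentiable (at x)" using differentiable_def by blast
  qed
  have pw: "partial j (\<lambda>x. ln (u x)) y = partial j u y / u y" if y: "y \<in> U" for j y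
  proof -
    have "DERIV (\<lambda>t. ln (u (y + t *\<^sub>R axis j 1))) 0 :> partial j u y / u y"
      using pos y partial_deriv[of u y j] du
      by (auto intro!: derivative_eq_intros simp: field_simps)
    then show ?thesis unfolding partial_def by (rule DERIV_imp_deriv)
  qed
  then show "\<forall>x\<in>U. partial j (\<lambda>x. ln (u x)) x = partial j u x / u x" by blast
  show "\<forall>j. \<forall>x\<in>U. partial j (\<lambda>x. ln (u x)) differentiable (at x)"
  proof (intro allI ballI)
    fix j x assume x: "x \<in> U"
    have "(\<lambda>y. partial j u y / u y) differentiable (at x)"
      using du dpu pos x by (intro differentiable_divide) auto
    then show "partial j (\<lambda>x. ln (u x)) differentiable (at x)"
      by (rule diff_transfer[OF U x, rotated]) (use pw in auto)
  qed
  show "\<forall>x\<in>U. partial k (partial j (\<lambda>x. ln (u x))) x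
          = (partial k (partial j u) x * u x - partial j u x * partial k u x) / (u x)^2"
  proof
    fix x assume x: "x \<in> U"
    have "partial k (partial j (\<lambda>x. ln (u x))) x = partial k (\<lambda>y. partial j u y / u y) x"
      by (rule partial_cong[OF U x]) (use pw in auto)
    also have "\<dots> = (partial k (partial j u) x * u x - partial j u x * partial k u x) / (u x)^2"
    proof -
      have "DERIV (\<lambda>t. partial j u (x + t *\<^sub>R axis k 1) / u (x + t *\<^sub>R axis k 1)) 0
         :> (partial k (partial j u) x * u x - partial j u x * partial k u x) / (u x)^2"
        using pos x partial_deriv[of u x k] partial_deriv[of "partial j u" x k] du dpu
        by (auto intro!: derivative_eq_intros simp: field_simps power2_eq_square)
      then show ?thesis unfolding partial_def by (rule DERIV_imp_deriv)
    qed
    finally show "partial k (partial j (\<lambda>x. ln (u x))) x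
          = (partial k (partial j u) x * u x - partial j u x * partial k u x) / (u x)^2" .
  qed
qed

lemma divop_formula:
  fixes u :: "real^'n::finite \<Rightarrow> real"
  assumes du: "u differentiable (at x)"
    and dpu: "\<forall>j. partial j u differentiable (at x)"
    and pos: "u x > 0"
  shows "divop u x = (\<Sum>i\<in>UNIV. ((partial i u x)^2 + u x * partial i (partial i u) x) / sqrt ((u x)^2 + grad_sq u x)
     - u x * partial i u x * (u x * partial i u x + (\<Sum>j\<in>UNIV. partial j u x * partial i (partial j u) x))
        / (sqrt ((u x)^2 + grad_sq u x))^3)"
  unfolding divop_def
proof (rule sum.cong[OF refl])
  fix i
  define S where "S = sqrt ((u x)^2 + grad_sq u x)"
  have S2: "(u x)^2 + grad_sq u x > 0" using pos by (simp add: grad_sq_def add_pos_nonneg sum_nonneg)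
  have S0: "S > 0" using S2 by (simp add: S_def)
  have SS: "S^2 = (u x)^2 + grad_sq u x" using S2 by (simp add: S_def)
  have Lj: "DERIV (\<lambda>t. partial j u (x + t *\<^sub>R axis i 1)) 0 :> partial i (partial j u) x" for j
    using partial_deriv[of "partial j u" x i] dpu by simp
  have Lu: "DERIV (\<lambda>t. u (x + t *\<^sub>R axis i 1)) 0 :> partial i u x"
    using partial_deriv[OF du] by simp
  define A where "A t = u (x + t *\<^sub>R axis i 1)" for t
  define B where "B t = partial i u (x + t *\<^sub>R axis i 1)" for t
  define G where "G t = (\<Sum>j\<in>UNIV. (partial j u (x + t *\<^sub>R axis i 1))^2)" for t
  define G' where "G' = (\<Sum>j\<in>UNIV. 2 * partial j u x * partial i (partial j u) x)"
  have A0: "A 0 = u x" and B0: "B 0 = partial i u x" and G0: "G 0 = grad_sq u x"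
    by (simp_all add: A_def B_def G_def grad_sq_def)
  have dA: "DERIV A 0 :> partial i u x" unfolding A_def by (rule Lu)
  have dB: "DERIV B 0 :> partial i (partial i u) x" unfolding B_def by (rule Lj)
  have dG: "DERIV G 0 :> G'" unfolding G_def G'_def
    by (rule derivative_eq_intros Lj refl | simp add: mult.commute mult.left_commute)+
  have dX: "DERIV (\<lambda>t. (A t)^2 + G t) 0 :> 2 * u x * partial i u x + G'"
    by (rule derivative_eq_intros dA dG refl | simp add: A0)+
  have dS: "DERIV (\<lambda>t. sqrt ((A t)^2 + G t)) 0 :> inverse S / 2 * (2 * u x * partial i u x + G')"
    using DERIV_chain2[OF DERIV_real_sqrt dX] S2 by (simp add: A0 G0 S_def)
  have dN: "DERIV (\<lambda>t. A t * B t) 0 :> partial i u x * partial i u x + partial i (partial i u) x * u x"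
    using DERIV_mult[OF dA dB] by (simp add: A0 B0)
  have dQ: "DERIV (\<lambda>t. A t * B t / sqrt ((A t)^2 + G t)) 0 :>
     ((partial i u x * partial i u x + partial i (partial i u) x * u x) * S - u x * partial i u x * (inverse S / 2 * (2 * u x * partial i u x + G'))) / (S * S)"
    using DERIV_divide[OF dN dS] S0 by (simp add: A0 B0 G0 S_def)
  have G'v: "G' = 2 * (\<Sum>j\<in>UNIV. partial j u x * partial i (partial j u) x)"
    by (simp add: G'_def sum_distrib_left mult.assoc)
  have val: "((partial i u x * partial i u x + partial i (partial i u) x * u x) * S - u x * partial i u x * (inverse S / 2 * (2 * u x * partial i u x + G'))) / (S * S)
     = ((partial i u x)^2 + u x * partial i (partial i u) x) / S
     - u x * partial i u x * (u x * partial i u x + (\<Sum>j\<in>UNIV. partial j u x * partial i (partial j u) x)) / S^3"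
    unfolding G'v using S0 by (simp add: field_simps power2_eq_square power3_eq_cube)
  have "partial i (\<lambda>y. u y * partial i u y / sqrt ((u y)\<^sup>2 + grad_sq u y)) x
     = deriv (\<lambda>t. A t * B t / sqrt ((A t)^2 + G t)) 0"
    by (simp add: partial_def A_def B_def G_def grad_sq_def)
  also have "\<dots> = ((partial i u x)^2 + u x * partial i (partial i u) x) / S
     - u x * partial i u x * (u x * partial i u x + (\<Sum>j\<in>UNIV. partial j u x * partial i (partial j u) x)) / S^3"
    using DERIV_imp_deriv[OF dQ] val by simp
  finally show "partial i (\<lambda>y. u y * partial i u y / sqrt ((u y)\<^sup>2 + grad_sq u y)) x = 
     ((partial i u x)^2 + u x * partial i (partial i u) x) / sqrt ((u x)^2 + grad_sq u x)
     - u x * partial i u x * (u x * partial i u x + (\<Sum>j\<in>UNIV. partial j u x * partial i (partial j u) x))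
        / (sqrt ((u x)^2 + grad_sq u x))^3" by (simp add: S_def)
qed

lemma alg_identity:
  fixes g :: "'n::finite \<Rightarrow> real" and H :: "'n \<Rightarrow> 'n \<Rightarrow> real"
  assumes a: "a > 0" and S: "S > 0" "S^2 = a^2 + (\<Sum>i\<in>UNIV. (g i)^2)"
  shows "(\<Sum>i\<in>UNIV. (H i i * a - g i * g i) / a^2)
      - (\<Sum>i\<in>UNIV. \<Sum>j\<in>UNIV. (H i j * a - g j * g i) / a^2 * (g i / a) * (g j / a)) / (1 + (\<Sum>i\<in>UNIV. (g i / a)^2))
      + (\<Sum>i\<in>UNIV. (g i / a)^2)
    = (\<Sum>i\<in>UNIV. ((g i)^2 + a * H i i) / S - a * g i * (a * g i + (\<Sum>j\<in>UNIV. g j * H i j)) / S^3) * S / a^2"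
proof -
  define P where "P = (\<Sum>i\<in>UNIV. (g i)^2)"
  define L where "L = (\<Sum>i\<in>UNIV. H i i)"
  define Hq where "Hq = (\<Sum>i\<in>UNIV. \<Sum>j\<in>UNIV. H i j * g i * g j)"
  have a0: "a \<noteq> 0" using a by simp
  have s1: "(\<Sum>i\<in>UNIV. (H i i * a - g i * g i) / a^2) = (a * L - P) / a^2"
    by (simp add: L_def P_def sum_divide_distrib[symmetric] sum_subtractf sum_distrib_right sum_distrib_left power2_eq_square mult.commute)
  have PP: "(\<Sum>i\<in>UNIV. \<Sum>j\<in>UNIV. g j * g i * (g i * g j)) = P^2"
    unfolding P_def power2_eq_square sum_product by (simp add: algebra_simps)
  have s2: "(\<Sum>i\<in>UNIV. \<Sum>j\<in>UNIV. (H i j * a - g j * g i) / a^2 * (g i / a) * (g j / a)) = (a * Hq - P^2) / a^4"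
  proof -
    have "(H i j * a - g j * g i) / a^2 * (g i / a) * (g j / a) = (a * (H i j * g i * g j) - g j * g i * (g i * g j)) / a^4" for i j
      using a0 by (simp add: field_simps power2_eq_square power4_eq_xxxx)
    then have "(\<Sum>i\<in>UNIV. \<Sum>j\<in>UNIV. (H i j * a - g j * g i) / a^2 * (g i / a) * (g j / a))
       = (\<Sum>i\<in>UNIV. \<Sum>j\<in>UNIV. (a * (H i j * g i * g j) - g j * g i * (g i * g j)) / a^4)" by simp
    also have "\<dots> = (a * Hq - P^2) / a^4"
      unfolding PP[symmetric] Hq_def
      by (simp add: sum_divide_distrib[symmetric] sum_subtractf sum_distrib_left)
    finally show ?thesis .
  qed
  have s3: "(\<Sum>i\<in>UNIV. (g i / a)^2) = P / a^2"
    by (simp add: P_def power_divide sum_divide_distrib)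
  have s4: "(\<Sum>i\<in>UNIV. ((g i)^2 + a * H i i) / S - a * g i * (a * g i + (\<Sum>j\<in>UNIV. g j * H i j)) / S^3)
      = (P + a * L) / S - a * (a * P + Hq) / S^3"
  proof -
    have h: "(\<Sum>i\<in>UNIV. g i * (\<Sum>j\<in>UNIV. g j * H i j)) = Hq"
      by (simp add: Hq_def sum_distrib_left algebra_simps)
    have "(\<Sum>i\<in>UNIV. a * g i * (a * g i + (\<Sum>j\<in>UNIV. g j * H i j))) = a * (a * P + Hq)"
      unfolding h[symmetric] P_def
      by (simp add: sum_distrib_left sum.distrib algebra_simps power2_eq_square)
    then show ?thesis
      by (simp add: sum_subtractf sum_divide_distrib[symmetric] sum.distrib P_def L_def sum_distrib_left)
  qed
  have S0: "S \<noteq> 0" using S by simp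
  have SP: "S^2 = a^2 + P" using S by (simp add: P_def)
  have r: "((P + a * L) / S - a * (a * P + Hq) / S^3) * S / a^2 = (P + a * L) / a^2 - a * (a * P + Hq) / (S^2 * a^2)"
    using S0 a0 by (simp add: field_simps power2_eq_square power3_eq_cube)
  have P0: "P \<ge> 0" by (simp add: P_def sum_nonneg)
  have d1: "a^2 + P > 0" using a P0 by (simp add: add_pos_nonneg)
  define D where "D = a^2 + P"
  have D0: "D \<noteq> 0" using d1 by (simp add: D_def)
  have e1: "(a * Hq - P^2) / a^4 / (1 + P / a^2) = (a * Hq - P^2) / (a^2 * D)"
  proof -
    have "1 + P / a^2 = D / a^2" using a0 by (simp add: D_def field_simps)
    then show ?thesis using a0 D0 by (simp add: power4_eq_xxxx power2_eq_square)
  qed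
  have "(a * L - P) / a^2 - (a * Hq - P^2) / (a^2 * D) + P / a^2 = (P + a * L) / a^2 - a * (a * P + Hq) / (D * a^2)"
    using a0 D0 by (simp add: field_simps power2_eq_square) (simp add: D_def algebra_simps power2_eq_square)
  then show ?thesis unfolding s1 s2 s3 s4 P_def[symmetric] r SP D_def[symmetric] e1 .
qed

lemma log_Qop:
  fixes u :: "real^'n::finite \<Rightarrow> real"
  assumes U: "open U" and du: "\<forall>x\<in>U. u differentiable (at x)"
    and dpu: "\<forall>j. \<forall>x\<in>U. partial j u differentiable (at x)"
    and pos: "\<forall>x\<in>U. u x > 0" and x: "x \<in> U"
  shows "Qop (\<lambda>x. ln (u x)) x = divop u x * sqrt ((u x)^2 + grad_sq u x) / (u x)^2"
proof -
  note pw = log_basic(2)[OF U du dpu pos]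
  note pww = log_basic(4)[OF U du dpu pos]
  have ux: "u x > 0" using pos x by blast
  have gp: "(u x)^2 + grad_sq u x > 0"
  proof -
    have "grad_sq u x \<ge> 0" by (simp add: grad_sq_def sum_nonneg)
    moreover have "(u x)^2 > 0" using ux by simp
    ultimately show ?thesis by linarith
  qed
  have S0: "sqrt ((u x)^2 + grad_sq u x) > 0" using gp by simp
  have SS: "(sqrt ((u x)^2 + grad_sq u x))^2 = (u x)^2 + (\<Sum>i\<in>UNIV. (partial i u x)^2)"
    using gp by (simp add: grad_sq_def)
  have "Qop (\<lambda>x. ln (u x)) x =
     (\<Sum>i\<in>UNIV. (partial i (partial i u) x * u x - partial i u x * partial i u x) / (u x)^2)
      - (\<Sum>i\<in>UNIV. \<Sum>j\<in>UNIV. (partial i (partial j u) x * u x - partial j u x * partial i u x) / (u x)^2 * (partial i u x / u x) * (partial j u x / u x))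
        / (1 + (\<Sum>i\<in>UNIV. (partial i u x / u x)^2))
      + (\<Sum>i\<in>UNIV. (partial i u x / u x)^2)"
    unfolding Qop_def grad_sq_def using pw pww x by simp
  also have "\<dots> = divop u x * sqrt ((u x)^2 + grad_sq u x) / (u x)^2"
  proof -
    have dv: "divop u x = (\<Sum>i\<in>UNIV. ((partial i u x)^2 + u x * partial i (partial i u) x) / sqrt ((u x)^2 + grad_sq u x)
     - u x * partial i u x * (u x * partial i u x + (\<Sum>j\<in>UNIV. partial j u x * partial i (partial j u) x))
        / (sqrt ((u x)^2 + grad_sq u x))^3)"
      by (rule divop_formula) (use du dpu ux x in auto)
    show ?thesis unfolding dv
      by (rule alg_identity[of "u x" "sqrt ((u x)^2 + grad_sq u x)" "\<lambda>i. partial i u x" "\<lambda>i j. partial i (partial j u) x", OF ux S0 SS])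
  qed
  finally show ?thesis .
qed

lemma core_min:
  fixes w :: "real^'n::finite \<Rightarrow> real"
  assumes U: "open U" "connected U" and dw: "\<forall>x\<in>U. w differentiable (at x)"
    and dpw: "\<forall>j. \<forall>x\<in>U. partial j w differentiable (at x)"
    and Q: "\<forall>x\<in>U. Qop w x \<le> 0"
    and x0: "x0 \<in> U" "\<forall>x\<in>U. w x0 \<le> w x"
  shows "\<exists>c. \<forall>x\<in>U. w x = c"
proof -
  note np = neg_props[OF U(1) dw dpw]
  have "\<forall>x\<in>U. Qop (\<lambda>x. - w x) x \<ge> 0"
  proof
    fix x assume x: "x \<in> U"
    have "grad_sq w x \<ge> 0" by (simp add: grad_sq_def sum_nonneg)
    moreover have "Qop w x \<le> 0" using Q x by blast
    moreover have "Qop (\<lambda>x. - w x) x = 2 * grad_sq w x - Qop w x" using np(3) x by blast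
    ultimately show "Qop (\<lambda>x. - w x) x \<ge> 0" by linarith
  qed
  then obtain c where "\<forall>x\<in>U. - w x = c"
    using core_max[OF U np(1) np(2) _ x0(1)] x0(2) by fastforce
  then show ?thesis by (metis add.inverse_inverse)
qed

theorem mainTheorem3:
  fixes U :: "(real^'n) set"
  assumes "open U" and "connected U"
  shows "(\<forall>w. C2_on U w \<and> (\<forall>x\<in>U. Qop w x \<ge> 0) \<and> (\<exists>x0\<in>U. \<forall>x\<in>U. w x \<le> w x0)
            \<longrightarrow> (\<exists>c. \<forall>x\<in>U. w x = c))
       \<and> (\<forall>w. C2_on U w \<and> (\<forall>x\<in>U. Qop w x \<le> 0) \<and> (\<exists>x0\<in>U. \<forall>x\<in>U. w x0 \<le> w x)
            \<longrightarrow> (\<exists>c. \<forall>x\<in>U. w x = c))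
       \<and> (\<forall>u. C2_on U u \<and> (\<forall>x\<in>U. u x > 0) \<and> (\<forall>x\<in>U. divop u x \<ge> 0)
              \<and> (\<exists>x0\<in>U. \<forall>x\<in>U. u x \<le> u x0)
            \<longrightarrow> (\<exists>c. \<forall>x\<in>U. u x = c))
       \<and> (\<forall>u. C2_on U u \<and> (\<forall>x\<in>U. u x > 0) \<and> (\<forall>x\<in>U. divop u x \<le> 0)
              \<and> (\<exists>x0\<in>U. \<forall>x\<in>U. u x0 \<le> u x)
            \<longrightarrow> (\<exists>c. \<forall>x\<in>U. u x = c))"
proof (intro conjI allI impI)
  fix w assume h: "C2_on U w \<and> (\<forall>x\<in>U. Qop w x \<ge> 0) \<and> (\<exists>x0\<in>U. \<forall>x\<in>U. w x \<le> w x0)"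
  then obtain x0 where x0: "x0 \<in> U" "\<forall>x\<in>U. w x \<le> w x0" by blast
  show "\<exists>c. \<forall>x\<in>U. w x = c"
    by (rule core_max[OF assms _ _ _ x0]) (use h in \<open>auto simp: C2_on_def\<close>)
next
  fix w assume h: "C2_on U w \<and> (\<forall>x\<in>U. Qop w x \<le> 0) \<and> (\<exists>x0\<in>U. \<forall>x\<in>U. w x0 \<le> w x)"
  then obtain x0 where x0: "x0 \<in> U" "\<forall>x\<in>U. w x0 \<le> w x" by blast
  show "\<exists>c. \<forall>x\<in>U. w x = c"
    by (rule core_min[OF assms _ _ _ x0]) (use h in \<open>auto simp: C2_on_def\<close>)
next
  fix u assume h: "C2_on U u \<and> (\<forall>x\<in>U. u x > 0) \<and> (\<forall>x\<in>U. divop u x \<ge> 0) \<and> (\<exists>x0\<in>U. \<forall>x\<in>U. u x \<le> u x0)"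
  then obtain x0 where x0: "x0 \<in> U" "\<forall>x\<in>U. u x \<le> u x0" by blast
  have du: "\<forall>x\<in>U. u differentiable (at x)" and dpu: "\<forall>j. \<forall>x\<in>U. partial j u differentiable (at x)"
    and pos: "\<forall>x\<in>U. u x > 0" using h by (auto simp: C2_on_def)
  note lb = log_basic[OF assms(1) du dpu pos]
  have Q: "\<forall>x\<in>U. Qop (\<lambda>x. ln (u x)) x \<ge> 0"
  proof
    fix x assume x: "x \<in> U"
    have "divop u x \<ge> 0" using h x by blast
    moreover have "(u x)^2 > 0" using pos x by (metis power2_less_0 zero_less_power2 less_irrefl)
    moreover have "sqrt ((u x)^2 + grad_sq u x) \<ge> 0"
      by (intro real_sqrt_ge_zero add_nonneg_nonneg) (simp_all add: grad_sq_def sum_nonneg)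
    ultimately have "divop u x * sqrt ((u x)^2 + grad_sq u x) / (u x)^2 \<ge> 0" by simp
    then show "Qop (\<lambda>x. ln (u x)) x \<ge> 0" using log_Qop[OF assms(1) du dpu pos x] by simp
  qed
  have mx: "\<forall>x\<in>U. ln (u x) \<le> ln (u x0)" using x0 pos by simp
  obtain c where c: "\<forall>x\<in>U. ln (u x) = c"
    using core_max[OF assms lb(1) lb(3) Q x0(1) mx] by blast
  have "\<forall>x\<in>U. u x = exp c" using c pos by (metis exp_ln)
  then show "\<exists>c. \<forall>x\<in>U. u x = c" by blast
next
  fix u assume h: "C2_on U u \<and> (\<forall>x\<in>U. u x > 0) \<and> (\<forall>x\<in>U. divop u x \<le> 0) \<and> (\<exists>x0\<in>U. \<forall>x\<in>U. u x0 \<le> u x)"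
  then obtain x0 where x0: "x0 \<in> U" "\<forall>x\<in>U. u x0 \<le> u x" by blast
  have du: "\<forall>x\<in>U. u differentiable (at x)" and dpu: "\<forall>j. \<forall>x\<in>U. partial j u differentiable (at x)"
    and pos: "\<forall>x\<in>U. u x > 0" using h by (auto simp: C2_on_def)
  note lb = log_basic[OF assms(1) du dpu pos]
  have Q: "\<forall>x\<in>U. Qop (\<lambda>x. ln (u x)) x \<le> 0"
  proof
    fix x assume x: "x \<in> U"
    have "divop u x \<le> 0" using h x by blast
    moreover have "(u x)^2 > 0" using pos x by (metis power2_less_0 zero_less_power2 less_irrefl)
    moreover have "sqrt ((u x)^2 + grad_sq u x) \<ge> 0"
      by (intro real_sqrt_ge_zero add_nonneg_nonneg) (simp_all add: grad_sq_def sum_nonneg)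
    ultimately have "divop u x * sqrt ((u x)^2 + grad_sq u x) / (u x)^2 \<le> 0"
      by (simp add: divide_nonpos_pos mult_nonpos_nonneg)
    then show "Qop (\<lambda>x. ln (u x)) x \<le> 0" using log_Qop[OF assms(1) du dpu pos x] by simp
  qed
  have mn: "\<forall>x\<in>U. ln (u x0) \<le> ln (u x)" using x0 pos by simp
  obtain c where c: "\<forall>x\<in>U. ln (u x) = c"
    using core_min[OF assms lb(1) lb(3) Q x0(1) mn] by blast
  have "\<forall>x\<in>U. u x = exp c" using c pos by (metis exp_ln)
  then show "\<exists>c. \<forall>x\<in>U. u x = c" by blast
qed

end
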